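(* Fix an integer $m\ge 1$, let $\xi=(\xi_1\ge\cdots\ge\xi_\ell>0)$ be a partition with $\xi_i\le m$ for all $i$, and let $\mu\in\mathbb Z_{\ge 0}$. Write $\mu=\mu_1 m+\mu_0$ with $0\le\mu_0<m$, and consider the formal power series \[ F(x)=F_{\xi,m,\mu}(x)=\frac{p_{m-\mu_0-1}(x)\,p_\xi(x)}{p_m(x)^{\mu_1+1}}=\sum_{r\ge 0}a_r x^r . \] Let $t:=\#\{i:\xi_i=m\}$. Then: (1) If $m=1$, then $F_{\xi,1,\mu}(x)=1$. (2) Assume $m\ge 2$. (a) If $t\ge \mu_1+1$, then $F_{\xi,m,\mu}(x)$ is a polynomial; in particular $a_r=0$ for all sufficiently large $r$. (b) If $t\le \mu_1$, then $a_r>0$ for all sufficiently large $r$.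
   Context: The polynomials $p_r(x)\in\mathbb Z[x]$ are defined by $p_0(x)=p_1(x)=1$ and $p_{r+1}(x)=p_r(x)-x\,p_{r-1}(x)$ for $r\ge 1$. For a partition $\xi=(\xi_1,\dots,\xi_\ell)$, $p_\xi(x):=\prod_{i=1}^\ell p_{\xi_i}(x)$. Since $p_m(0)=1$, the quotient is a well-defined formal power series in $x$. *)

theory Defs
  imports "HOL-Computational_Algebra.Computational_Algebra"
begin

fun pp :: "nat \<Rightarrow> int poly" where
  "pp 0 = 1"
| "pp (Suc 0) = 1"
| "pp (Suc (Suc r)) = pp (Suc r) - [:0, 1:] * pp r"

definition pxi :: "nat list \<Rightarrow> int poly" where
  "pxi xi = prod_list (map pp xi)"

text \<open>The formal power series F_{xi,m,mu}, computed in Q[[x]] (denominator has constant term 1).\<close>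
definition Fser :: "nat list \<Rightarrow> nat \<Rightarrow> nat \<Rightarrow> rat fps" where
  "Fser xi m mu =
     fps_of_poly (map_poly of_int (pp (m - mu mod m - 1) * pxi xi))
     / fps_of_poly (map_poly of_int (pp m ^ (mu div m + 1)))"

end

theory Submission imports Defs "HOL-Analysis.Analysis" begin

lemma mi_add: "map_poly (of_int :: int \<Rightarrow> 'a::comm_ring_1) (p + q) = map_poly of_int p + map_poly of_int q"
  by (rule poly_eqI) (simp add: coeff_map_poly)
lemma mi_diff: "map_poly (of_int :: int \<Rightarrow> 'a::comm_ring_1) (p - q) = map_poly of_int p - map_poly of_int q"
  by (rule poly_eqI) (simp add: coeff_map_poly)
lemma mi_mult: "map_poly (of_int :: int \<Rightarrow> 'a::comm_ring_1) (p * q) = map_poly of_int p * map_poly of_int q"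
  by (rule poly_eqI) (simp add: coeff_map_poly coeff_mult)
lemma mi_power: "map_poly (of_int :: int \<Rightarrow> 'a::comm_ring_1) (p ^ n) = map_poly of_int p ^ n"
  by (induction n) (simp_all add: mi_mult)
lemma mi_X: "map_poly (of_int :: int \<Rightarrow> 'a::comm_ring_1) [:0, 1:] = [:0, 1:]"
  by (rule poly_eqI) (simp add: coeff_map_poly coeff_pCons split: nat.split)

definition rp :: "nat \<Rightarrow> real poly" where "rp r = map_poly real_of_int (pp r)"

lemma rp_simps: "rp 0 = 1" "rp (Suc 0) = 1"
  "rp (Suc (Suc r)) = rp (Suc r) - [:0, 1:] * rp r"
  by (simp_all only: rp_def pp.simps mi_diff mi_mult mi_X map_poly_1' of_int_1)

lemma deg_pp: "degree (pp r) \<le> r div 2"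
proof (induction r rule: pp.induct)
  case (3 r)
  have "degree ([:0, 1:] * pp r) \<le> Suc (r div 2)"
    using 3(2) degree_mult_le[of "[:0,1::int:]" "pp r"] by simp
  then show ?case using 3(1) degree_diff_le[of "pp (Suc r)" _ "[:0, 1:] * pp r"]
    by simp
qed auto

lemma deg_rp: "degree (rp r) \<le> r div 2"
  unfolding rp_def using deg_pp[of r] map_poly_degree_leq[of real_of_int "pp r"] by linarith

lemma rp_trig:
  assumes "cos t \<noteq> 0"
  shows "poly (rp r) (1 / (4 * (cos t)^2)) * (2 * cos t)^r * sin t = sin (real (Suc r) * t)"
proof (induction r rule: pp.induct)
  case 1 then show ?case by (simp add: rp_simps)
next
  case 2 then show ?case by (simp add: rp_simps sin_double)
next
  case (3 r)
  have e: "sin (real (Suc (Suc (Suc r))) * t) = 2 * cos t * sin (real (Suc (Suc r)) * t) - sin (real (Suc r) * t)"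
  proof -
    have "sin (real (Suc (Suc (Suc r))) * t) = sin (real (Suc (Suc r)) * t + t)" by (simp add: algebra_simps)
    moreover have "sin (real (Suc r) * t) = sin (real (Suc (Suc r)) * t - t)" by (simp add: algebra_simps)
    ultimately show ?thesis by (simp add: sin_add sin_diff)
  qed
  define x where "x = 1 / (4 * (cos t)^2)"
  define A where "A = poly (rp (Suc r)) x * (2 * cos t)^(Suc r) * sin t"
  define B where "B = poly (rp r) x * (2 * cos t)^r * sin t"
  have x1: "x * (2 * cos t)^2 = 1" using assms by (simp add: x_def field_simps power2_eq_square)
  have hA: "A = sin (real (Suc (Suc r)) * t)" unfolding A_def x_def by (rule 3(1))
  have hB: "B = sin (real (Suc r) * t)" unfolding B_def x_def by (rule 3(2))
  have "poly (rp (Suc (Suc r))) x * (2 * cos t)^(Suc (Suc r)) * sin t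
     = 2 * cos t * A - (x * (2 * cos t)^2) * B"
  proof -
    have pe: "poly (rp (Suc (Suc r))) x = poly (rp (Suc r)) x - x * poly (rp r) x" by (simp add: rp_simps)
    show ?thesis unfolding A_def B_def pe power_Suc power2_eq_square by algebra
  qed
  also have "\<dots> = 2 * cos t * A - B" unfolding x1 by simp
  also have "\<dots> = sin (real (Suc (Suc (Suc r))) * t)" using e hA hB by simp
  finally show ?case by (simp only: x_def)
qed


lemma lin_factors:
  fixes x :: "'b \<Rightarrow> real" and p :: "real poly"
  assumes "finite S" "inj_on x S" "\<forall>j\<in>S. poly p (x j) = 0"
  shows "\<exists>q. p = (\<Prod>j\<in>S. [:-x j, 1:]) * q"
  using assms
proof (induction S arbitrary: p rule: finite_induct)
  case empty thus ?case by auto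
next
  case (insert a S)
  have "poly p (x a) = 0" using insert by auto
  then obtain p1 where p1: "p = [:-x a, 1:] * p1" using poly_eq_0_iff_dvd by (metis dvdE)
  have "\<forall>j\<in>S. poly p1 (x j) = 0"
  proof
    fix j assume j: "j \<in> S"
    have "x j \<noteq> x a" using insert(2,4) j unfolding inj_on_def by blast
    moreover have "poly p (x j) = 0" using insert(5) j by auto
    ultimately show "poly p1 (x j) = 0" using p1 by simp
  qed
  then obtain q where "p1 = (\<Prod>j\<in>S. [:-x j, 1:]) * q" using insert by auto
  then have "p = ([:-x a, 1:] * (\<Prod>j\<in>S. [:-x j, 1:])) * q" using p1 by (simp only: mult.assoc)
  moreover have "(\<Prod>j\<in>insert a S. [:-x j,1:]) = [:-x a,1:] * (\<Prod>j\<in>S. [:-x j,1:])" by (rule prod.insert[OF insert(1,2)])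
  ultimately show ?case by (intro exI[of _ q]) simp
qed

lemma deg_lin: "finite S \<Longrightarrow> degree (\<Prod>j\<in>S. [:-x j, 1:] :: real poly) = card S"
proof (induction S rule: finite_induct)
  case (insert a S)
  have nz: "(\<Prod>j\<in>S. [:-x j, 1:] :: real poly) \<noteq> 0" using insert by (simp add: prod_zero_iff)
  have "degree ([:-x a, 1:] * (\<Prod>j\<in>S. [:-x j, 1:] :: real poly)) = degree [:-x a, 1:] + degree (\<Prod>j\<in>S. [:-x j, 1:] :: real poly)"
    by (rule degree_mult_eq) (use nz in auto)
  then show ?case using insert by (simp only: prod.insert card.insert_remove) simp
qed auto

lemma factor:
  fixes p :: "real poly" and x :: "'b \<Rightarrow> real"
  assumes "finite S" "inj_on x S" "\<forall>j\<in>S. poly p (x j) = 0" "degree p \<le> card S" "poly p 0 = 1"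
  shows "p = (\<Prod>j\<in>S. [:1, -1/x j:])"
proof -
  obtain q where q: "p = (\<Prod>j\<in>S. [:-x j, 1:]) * q" using lin_factors[OF assms(1-3)] by blast
  have p0: "p \<noteq> 0" using assms(5) by auto
  have P0: "(\<Prod>j\<in>S. [:-x j, 1:] :: real poly) \<noteq> 0" using assms(1) by (simp add: prod_zero_iff)
  have q0: "q \<noteq> 0" using p0 q by auto
  have "degree p = card S + degree q" using q P0 q0 deg_lin[OF assms(1)] by (simp add: degree_mult_eq)
  then have "degree q = 0" using assms(4) by simp
  then obtain c where c: "q = [:c:]" by (metis degree_eq_zeroE)
  have xnz: "\<forall>j\<in>S. x j \<noteq> 0" using assms(3,5) by auto
  have pv: "poly p y = c * (\<Prod>j\<in>S. y - x j)" for y using q c by (simp add: poly_prod)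
  have c1: "c * (\<Prod>j\<in>S. - x j) = 1" using pv[of 0] assms(5) by simp
  have "(\<Prod>j\<in>S. -1 / x j) * (\<Prod>j\<in>S. - x j) = (\<Prod>j\<in>S. (-1/x j) * (- x j))"
    by (rule prod.distrib[symmetric])
  also have "\<dots> = (\<Prod>j\<in>S. 1)" by (rule prod.cong) (use xnz in auto)
  also have "\<dots> = 1" by simp
  finally have cc: "(\<Prod>j\<in>S. -1 / x j) = c" using c1
    by (metis mult.commute mult.left_neutral mult.assoc)
  have "poly p y = poly (\<Prod>j\<in>S. [:1, -1/x j:]) y" for y
  proof -
    have "poly (\<Prod>j\<in>S. [:1, -1/x j:]) y = (\<Prod>j\<in>S. (-1/x j) * (y - x j))"
      by (simp add: poly_prod) (intro prod.cong refl, use xnz in \<open>auto simp: field_simps\<close>)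
    also have "\<dots> = c * (\<Prod>j\<in>S. y - x j)" by (simp only: prod.distrib cc)
    finally show ?thesis using pv by simp
  qed
  then show ?thesis using poly_eq_poly_eq_iff by blast
qed

definition geo :: "real \<Rightarrow> real fps" where "geo c = Abs_fps (\<lambda>n. c ^ n)"

lemma geo_inv: "(1 - fps_const c * fps_X) * geo c = 1"
proof (rule fps_ext)
  fix n
  show "fps_nth ((1 - fps_const c * fps_X) * geo c) n = fps_nth 1 n"
    by (cases n) (simp_all add: geo_def algebra_simps fps_X_mult_nth)
qed

lemma geo_conv:
  assumes "0 \<le> c" "0 \<le> z" "c * z < 1"
  shows "ereal z < fps_conv_radius (geo c) \<and> eval_fps (geo c) z = 1 / (1 - c * z)"
proof
  obtain z' where z': "z < z'" "c * z' < 1"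
  proof (cases "c = 0")
    case True then show ?thesis using that[of "z+1"] by auto
  next
    case False
    then have "c > 0" using assms by auto
    then show ?thesis using that[of "(z + 1/c)/2"] assms by (auto simp: field_simps)
  qed
  have "summable (\<lambda>n. (c * z') ^ n)" using z' assms by (intro summable_geometric) auto
  then have "summable (\<lambda>n. fps_nth (geo c) n * z' ^ n)" by (simp add: geo_def power_mult_distrib)
  then have "conv_radius (fps_nth (geo c)) \<ge> norm z'" by (rule conv_radius_geI)
  moreover have "norm z' = z'" using z' assms by simp
  moreover have "ereal z < ereal z'" using z' by simp
  ultimately show "ereal z < fps_conv_radius (geo c)" unfolding fps_conv_radius_def
    by (metis order_less_le_trans)
  have "eval_fps (geo c) z = (\<Sum>n. (c * z) ^ n)" by (simp add: eval_fps_def geo_def power_mult_distrib)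
  also have "\<dots> = 1 / (1 - c * z)" using assms by (intro suminf_geometric) auto
  finally show "eval_fps (geo c) z = 1 / (1 - c * z)" .
qed

lemma prod_conv:
  fixes f :: "'b \<Rightarrow> real fps"
  assumes "finite S" "\<forall>j\<in>S. ereal z < fps_conv_radius (f j)" "0 \<le> z"
  shows "ereal z < fps_conv_radius (\<Prod>j\<in>S. f j) \<and> eval_fps (\<Prod>j\<in>S. f j) z = (\<Prod>j\<in>S. eval_fps (f j) z)"
  using assms
proof (induction S rule: finite_induct)
  case (insert a S)
  then have h: "ereal z < fps_conv_radius (\<Prod>j\<in>S. f j)" "eval_fps (\<Prod>j\<in>S. f j) z = (\<Prod>j\<in>S. eval_fps (f j) z)"
    "ereal z < fps_conv_radius (f a)" by auto
  have "ereal z < min (fps_conv_radius (f a)) (fps_conv_radius (\<Prod>j\<in>S. f j))" using h by simp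
  also have "\<dots> \<le> fps_conv_radius (f a * (\<Prod>j\<in>S. f j))" by (rule fps_conv_radius_mult)
  finally show ?case using insert(1,2) h insert(5) by (simp add: eval_fps_mult)
qed auto

lemma pow_conv:
  fixes f :: "real fps"
  assumes "ereal z < fps_conv_radius f" "0 \<le> z"
  shows "ereal z < fps_conv_radius (f ^ k) \<and> eval_fps (f ^ k) z = eval_fps f z ^ k"
  using assms order_less_le_trans[OF assms(1) fps_conv_radius_power[of f k]]
  by (simp add: eval_fps_power)


lemma geo_step:
  fixes f :: "real fps"
  assumes "\<rho> > 0"
  shows "fps_nth (f * geo (1/\<rho>)) r * \<rho> ^ r = (\<Sum>i\<le>r. fps_nth f i * \<rho> ^ i)"
proof -
  have "fps_nth (f * geo (1/\<rho>)) r * \<rho> ^ r = (\<Sum>i=0..r. fps_nth f i * (1/\<rho>) ^ (r - i) * \<rho> ^ r)"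
    by (simp add: fps_mult_nth geo_def sum_distrib_right)
  also have "\<dots> = (\<Sum>i=0..r. fps_nth f i * \<rho> ^ i)"
  proof (rule sum.cong)
    fix i assume "i \<in> {0..r}"
    then have "\<rho> ^ r = \<rho> ^ i * \<rho> ^ (r - i)" by (simp add: power_add[symmetric])
    then show "fps_nth f i * (1/\<rho>) ^ (r - i) * \<rho> ^ r = fps_nth f i * \<rho> ^ i"
      using assms by (simp add: power_one_over field_simps)
  qed simp
  finally show ?thesis by (simp add: atMost_atLeast0)
qed

lemma psums_pos:
  fixes s :: "nat \<Rightarrow> real"
  assumes "c > 0" "eventually (\<lambda>r. s r \<ge> c) sequentially"
  shows "eventually (\<lambda>r. (\<Sum>i\<le>r. s i) \<ge> c) sequentially"
proof -
  obtain N where N: "\<And>i. i \<ge> N \<Longrightarrow> s i \<ge> c" using assms(2) by (auto simp: eventually_sequentially)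
  define S0 where "S0 = (\<Sum>i<N. s i)"
  have lb: "(\<Sum>i\<le>N + d. s i) \<ge> S0 + real (d + 1) * c" for d
  proof (induction d)
    case 0
    have "(\<Sum>i\<le>N + 0. s i) = S0 + s N" by (simp add: S0_def lessThan_Suc_atMost[symmetric])
    then show ?case using N[of N] by simp
  next
    case (Suc d)
    have "(\<Sum>i\<le>N + Suc d. s i) = (\<Sum>i\<le>N + d. s i) + s (N + Suc d)" by simp
    then show ?case using Suc N[of "N + Suc d"] by (simp add: algebra_simps)
  qed
  define M where "M = nat \<lceil>\<bar>S0\<bar> / c\<rceil>"
  have "real M \<ge> \<bar>S0\<bar> / c" unfolding M_def by linarith
  then have Mc: "real M * c \<ge> \<bar>S0\<bar>" using assms(1) by (simp add: field_simps)
  show ?thesis unfolding eventually_sequentially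
  proof (intro exI[of _ "N + M"] allI impI)
    fix r assume r: "N + M \<le> r"
    define d where "d = r - N"
    have rd: "r = N + d" and dM: "M \<le> d" using r by (auto simp: d_def)
    have "real (d + 1) * c \<ge> real M * c + c" using dM assms(1) by (simp add: algebra_simps)
    then have "S0 + real (d + 1) * c \<ge> c" using Mc by linarith
    then show "(\<Sum>i\<le>r. s i) \<ge> c" using lb[of d] unfolding rd by linarith
  qed
qed

lemma growth:
  fixes g :: "real fps" and \<rho> :: real
  assumes "\<rho> > 0" "ereal \<rho> < fps_conv_radius g" "eval_fps g \<rho> > 0" "k \<ge> 1"
  shows "eventually (\<lambda>r. fps_nth (g * geo (1/\<rho>) ^ k) r > 0) sequentially"
proof -
  define s where "s n r = fps_nth (g * geo (1/\<rho>) ^ n) r * \<rho> ^ r" for n r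
  have s_Suc: "s (Suc n) r = (\<Sum>i\<le>r. s n i)" for n r
  proof -
    have e: "g * geo (1/\<rho>) ^ Suc n = (g * geo (1/\<rho>) ^ n) * geo (1/\<rho>)" by (simp add: algebra_simps)
    show ?thesis unfolding s_def e by (rule geo_step[OF assms(1)])
  qed
  have main: "\<exists>c>0. eventually (\<lambda>r. s (Suc n) r \<ge> c) sequentially" for n
  proof (induction n)
    case 0
    define L where "L = eval_fps g \<rho>"
    have "(\<lambda>n. fps_nth g n * \<rho> ^ n) sums L" unfolding L_def
      using sums_eval_fps[of \<rho> g] assms by simp
    then have "(\<lambda>r. \<Sum>i<r. fps_nth g i * \<rho> ^ i) \<longlonglongrightarrow> L" by (simp add: sums_def)
    then have "(\<lambda>r. \<Sum>i<Suc r. fps_nth g i * \<rho> ^ i) \<longlonglongrightarrow> L" by (rule LIMSEQ_Suc)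
    moreover have "s (Suc 0) r = (\<Sum>i<Suc r. fps_nth g i * \<rho> ^ i)" for r
      by (simp only: s_Suc) (simp add: s_def lessThan_Suc_atMost)
    ultimately have t: "(\<lambda>r. s (Suc 0) r) \<longlonglongrightarrow> L" by simp
    have "L / 2 < L" using assms(3) by (simp add: L_def)
    from order_tendstoD(1)[OF t this] have "eventually (\<lambda>r. s (Suc 0) r \<ge> L / 2) sequentially"
      by (auto elim: eventually_mono)
    then show ?case using assms(3) by (intro exI[of _ "L/2"]) (simp add: L_def)
  next
    case (Suc n)
    then obtain c where "c > 0" "eventually (\<lambda>r. s (Suc n) r \<ge> c) sequentially" by blast
    then show ?case using psums_pos[of c "s (Suc n)"] by (auto simp: s_Suc)
  qed
  obtain n where n: "k = Suc n" using assms(4) by (cases k) auto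
  obtain c where "c > 0" "eventually (\<lambda>r. s k r \<ge> c) sequentially" using main[of n] n by blast
  then have "eventually (\<lambda>r. s k r > 0) sequentially" by (auto elim: eventually_mono)
  then show ?thesis
  proof (rule eventually_mono)
    fix r assume "s k r > 0"
    then show "fps_nth (g * geo (1/\<rho>) ^ k) r > 0" unfolding s_def using assms(1)
      by (simp add: zero_less_mult_iff)
  qed
qed


lemma pp_at0: "poly (pp r) 0 = 1"
  by (induction r rule: pp.induct) auto

lemma pxi_split: "pxi xs = pp m ^ length (filter (\<lambda>i. i = m) xs) * pxi (filter (\<lambda>i. i \<noteq> m) xs)"
  by (induction xs) (auto simp: pxi_def algebra_simps)

definition EP :: "int poly \<Rightarrow> 'a::comm_ring_1 fps" where
  "EP p = fps_of_poly (map_poly of_int p)"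

lemma EP_mult: "EP (p * q) = EP p * EP q"
  by (simp add: EP_def mi_mult fps_of_poly_mult)
lemma EP_power: "EP (p ^ n) = EP p ^ n"
  by (simp add: EP_def mi_power fps_of_poly_power)
lemma EP_0: "fps_nth (EP p :: 'a::comm_ring_1 fps) 0 = of_int (poly p 0)"
  by (simp add: EP_def coeff_map_poly poly_0_coeff_0)

definition RM :: "rat fps \<Rightarrow> real fps" where
  "RM f = Abs_fps (\<lambda>n. of_rat (fps_nth f n))"

lemma RM_mult: "RM (f * g) = RM f * RM g"
  by (rule fps_ext) (simp add: RM_def fps_mult_nth of_rat_sum of_rat_mult)
lemma RM_EP: "RM (EP p) = EP p"
  by (rule fps_ext) (simp add: RM_def EP_def coeff_map_poly)

lemma Fser_eq: "Fser xi m mu * EP (pp m ^ (mu div m + 1)) = EP (pp (m - mu mod m - 1) * pxi xi)"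
proof -
  have nz: "fps_nth (EP (pp m ^ (mu div m + 1)) :: rat fps) 0 \<noteq> 0"
    by (simp add: EP_0 pp_at0 poly_power)
  show ?thesis unfolding Fser_def EP_def[symmetric]
    using nz by (simp add: fps_divide_unit mult.assoc inverse_mult_eq_1)
qed

lemma mi_pxi_pos:
  assumes "\<forall>j\<in>set xs. poly (rp j) z > 0"
  shows "poly (map_poly real_of_int (pxi xs)) z > 0"
  using assms by (induction xs) (auto simp: pxi_def mi_mult rp_def)


definition xr :: "nat \<Rightarrow> nat \<Rightarrow> real" where
  "xr m j = 1 / (4 * (cos (real j * pi / real (m + 1)))^2)"

lemma ang_facts:
  assumes "1 \<le> j" "2 * j \<le> m"
  shows "0 < real j * pi / real (m + 1)" "real j * pi / real (m + 1) < pi / 2"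
    "cos (real j * pi / real (m + 1)) > 0" "sin (real j * pi / real (m + 1)) > 0"
proof -
  show a: "0 < real j * pi / real (m + 1)" using assms by simp
  have "real j * pi / real (m + 1) < pi / 2 \<longleftrightarrow> real j * pi * 2 < pi * real (m + 1)"
    by (simp add: field_simps)
  also have "\<dots> \<longleftrightarrow> pi * real (2 * j) < pi * real (m + 1)" by (simp add: algebra_simps)
  also have "\<dots> \<longleftrightarrow> real (2 * j) < real (m + 1)" using pi_gt_zero by (rule mult_less_cancel_left_pos)
  finally show b: "real j * pi / real (m + 1) < pi / 2" using assms by simp
  have c: "- (pi / 2) < real j * pi / real (m + 1)" using a pi_gt_zero by linarith
  show "cos (real j * pi / real (m + 1)) > 0" using c b by (rule cos_gt_zero_pi)
  have d: "real j * pi / real (m + 1) < pi" using b pi_gt_zero by linarith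
  show "sin (real j * pi / real (m + 1)) > 0" using a d by (rule sin_gt_zero)
qed

lemma xr_root:
  assumes "1 \<le> j" "2 * j \<le> m"
  shows "poly (rp m) (xr m j) = 0"
proof -
  define t where "t = real j * pi / real (m + 1)"
  note af = ang_facts[OF assms, folded t_def]
  have "poly (rp m) (xr m j) * (2 * cos t)^m * sin t = sin (real (Suc m) * t)"
    unfolding xr_def t_def[symmetric] using af by (intro rp_trig) auto
  also have "real (Suc m) * t = real j * pi" by (simp add: t_def)
  finally have "poly (rp m) (xr m j) * ((2 * cos t)^m * sin t) = 0" by simp
  moreover have "(2 * cos t)^m * sin t \<noteq> 0" using af by simp
  ultimately show ?thesis by (metis mult_eq_0_iff)
qed

lemma xr_mono:
  assumes "1 \<le> i" "i < j" "2 * j \<le> m"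
  shows "xr m i < xr m j"
proof -
  have ai: "0 < real i * pi / real (m + 1)" "cos (real i * pi / real (m + 1)) > 0"
    using ang_facts[of i m] assms by auto
  have aj: "cos (real j * pi / real (m + 1)) > 0" "real j * pi / real (m + 1) < pi / 2"
    using ang_facts[of j m] assms by auto
  have "real i * pi / real (m + 1) < real j * pi / real (m + 1)" using assms
    by (simp add: divide_strict_right_mono)
  moreover have "real j * pi / real (m + 1) \<le> pi" using aj(2) pi_gt_zero by linarith
  ultimately have "cos (real j * pi / real (m + 1)) < cos (real i * pi / real (m + 1))"
    using ai by (intro cos_monotone_0_pi) auto
  then have "(cos (real j * pi / real (m + 1)))^2 < (cos (real i * pi / real (m + 1)))^2"
    using aj by (intro power_strict_mono) auto
  moreover have "0 < (cos (real j * pi / real (m + 1)))^2" using aj by simp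
  ultimately show ?thesis unfolding xr_def by (simp add: divide_simps)
qed

lemma xr_pos:
  assumes "1 \<le> j" "2 * j \<le> m"
  shows "xr m j > 0"
  using ang_facts[OF assms] by (simp add: xr_def)

lemma rp_factor:
  assumes "m \<ge> 2"
  shows "rp m = (\<Prod>j\<in>{1..m div 2}. [:1, -1/xr m j:])"
proof (rule factor)
  show "inj_on (xr m) {1..m div 2}"
  proof (rule inj_onI)
    fix i j assume ij: "i \<in> {1..m div 2}" "j \<in> {1..m div 2}" "xr m i = xr m j"
    show "i = j"
    proof (rule ccontr)
      assume "i \<noteq> j"
      then consider "i < j" | "j < i" by linarith
      moreover have "2 * i \<le> m" "2 * j \<le> m" "1 \<le> i" "1 \<le> j" using ij by auto
      ultimately show False using ij(3) xr_mono[of i j m] xr_mono[of j i m] by cases auto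
    qed
  qed
  show "\<forall>j\<in>{1..m div 2}. poly (rp m) (xr m j) = 0" using xr_root by auto
  show "degree (rp m) \<le> card {1..m div 2}" using deg_rp[of m] by simp
  show "poly (rp m) 0 = 1" by (simp add: rp_def poly_0_coeff_0 coeff_map_poly pp_at0[unfolded poly_0_coeff_0])
qed simp

lemma rp_pos:
  assumes "m \<ge> 2" "j < m"
  shows "poly (rp j) (xr m 1) > 0"
proof -
  define t where "t = real 1 * pi / real (m + 1)"
  have af: "0 < t" "t < pi/2" "cos t > 0" "sin t > 0" using ang_facts[of 1 m] assms unfolding t_def by auto
  have "poly (rp j) (xr m 1) * (2 * cos t)^j * sin t = sin (real (Suc j) * t)"
    unfolding xr_def t_def[symmetric] using af by (intro rp_trig) auto
  moreover have "sin (real (Suc j) * t) > 0"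
  proof (rule sin_gt_zero)
    show "0 < real (Suc j) * t" using af by simp
    have "real (Suc j) < real (m + 1)" using assms by simp
    then show "real (Suc j) * t < pi" unfolding t_def by (simp add: field_simps)
  qed
  moreover have "(2 * cos t)^j * sin t > 0" using af by simp
  ultimately show ?thesis by (metis mult.assoc zero_less_mult_pos2)
qed


lemma EP_pp_nz: "(EP (pp m) :: 'a::{comm_ring_1, ring_char_0} fps) \<noteq> 0"
proof
  assume "(EP (pp m) :: 'a fps) = 0"
  then have "fps_nth (EP (pp m) :: 'a fps) 0 = 0" by simp
  then show False by (simp add: EP_0 pp_at0)
qed

lemma lin_fps: "fps_of_poly [:1, -1/a:] = 1 - fps_const (1/a :: real) * fps_X"
  by (rule fps_ext) (simp add: coeff_pCons split: nat.split)

lemma case_b: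
  assumes m2: "m \<ge> 2" and xi: "\<forall>i\<in>set xi. 0 < i \<and> i \<le> m"
    and tle: "length (filter (\<lambda>i. i = m) xi) \<le> mu div m"
  shows "eventually (\<lambda>r. fps_nth (Fser xi m mu) r > 0) sequentially"
proof -
  define t where "t = length (filter (\<lambda>i. i = m) xi)"
  define xs where "xs = filter (\<lambda>i. i \<noteq> m) xi"
  define k where "k = mu div m + 1 - t"
  define j0 where "j0 = m - mu mod m - 1"
  define N where "N = pp j0 * pxi xs"
  define d where "d = m div 2"
  define c where "c j = 1 / xr m j" for j
  define \<rho> where "\<rho> = xr m 1"
  have k1: "k \<ge> 1" using tle by (simp add: k_def t_def)
  have kt: "mu div m + 1 = t + k" using tle by (simp add: k_def t_def)
  have d1: "d \<ge> 1" using m2 by (simp add: d_def)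
  have eqA: "pp j0 * pxi xi = N * pp m ^ t"
    unfolding N_def t_def xs_def using pxi_split[of xi m] by (simp add: algebra_simps)
  have eqq: "Fser xi m mu * EP (pp m ^ t * pp m ^ k) = EP (N * pp m ^ t)"
    using Fser_eq[of xi m mu] unfolding kt power_add eqA[symmetric] j0_def by simp
  have "RM (Fser xi m mu * EP (pp m ^ t * pp m ^ k)) = RM (EP (N * pp m ^ t))" using eqq by simp
  then have "RM (Fser xi m mu) * EP (pp m ^ t * pp m ^ k) = EP (N * pp m ^ t)"
    by (simp only: RM_mult RM_EP)
  then have "RM (Fser xi m mu) * (EP (pp m) ^ t * EP (pp m) ^ k) = EP N * EP (pp m) ^ t"
    by (simp only: EP_mult EP_power)
  then have eqR: "RM (Fser xi m mu) * EP (pp m) ^ k = EP N"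
    using EP_pp_nz[of m, where 'a=real] by (simp add: algebra_simps)
  define P :: "real fps" where "P = EP (pp m)"
  define L where "L j = 1 - fps_const (c j) * fps_X" for j
  have P_fac: "P = (\<Prod>j\<in>{1..d}. L j)"
  proof -
    have "P = fps_of_poly (rp m)" by (simp add: P_def EP_def rp_def)
    also have "\<dots> = (\<Prod>j\<in>{1..d}. fps_of_poly [:1, -1/xr m j:])"
      unfolding rp_factor[OF m2] d_def by (rule fps_of_poly_prod)
    also have "\<dots> = (\<Prod>j\<in>{1..d}. L j)"
      by (rule prod.cong) (simp_all only: lin_fps L_def c_def)
    finally show ?thesis .
  qed
  define g where "g = EP N * (\<Prod>j\<in>{2..d}. geo (c j) ^ k)"
  have ins: "{1..d} = insert 1 {2..d}" using d1 by auto
  have GL: "geo (c j) ^ k * L j ^ k = 1" for j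
    by (simp only: power_mult_distrib[symmetric] L_def mult.commute[of "geo (c j)"] geo_inv power_one)
  have A: "(\<Prod>j\<in>{2..d}. geo (c j) ^ k) * (\<Prod>j\<in>{2..d}. L j ^ k) = 1"
    by (simp only: prod.distrib[symmetric] GL prod.neutral_const)
  have Pk: "P ^ k = L 1 ^ k * (\<Prod>j\<in>{2..d}. L j ^ k)"
    unfolding P_fac ins prod_power_distrib by (rule prod.insert) auto
  have "(g * geo (c 1) ^ k) * P ^ k
        = EP N * ((\<Prod>j\<in>{2..d}. geo (c j) ^ k) * (\<Prod>j\<in>{2..d}. L j ^ k)) * (geo (c 1) ^ k * L 1 ^ k)"
    unfolding g_def Pk by (simp only: mult_ac)
  also have "\<dots> = EP N" by (simp only: A GL mult_1_right)
  finally have "RM (Fser xi m mu) * P ^ k = (g * geo (c 1) ^ k) * P ^ k" using eqR P_def by simp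
  moreover have "P ^ k \<noteq> 0" using EP_pp_nz[of m, where 'a=real] by (simp add: P_def)
  ultimately have "RM (Fser xi m mu) = g * geo (c 1) ^ k" by (metis mult_right_cancel)
  then have RF: "RM (Fser xi m mu) = g * geo (1 / \<rho>) ^ k" by (simp add: c_def \<rho>_def)
  have rho0: "\<rho> > 0" using xr_pos[of 1 m] m2 by (simp add: \<rho>_def)
  have geoj: "ereal \<rho> < fps_conv_radius (geo (c j) ^ k) \<and> eval_fps (geo (c j) ^ k) \<rho> > 0"
    if j: "j \<in> {2..d}" for j
  proof -
    have "\<rho> < xr m j" using xr_mono[of 1 j m] j by (auto simp: \<rho>_def d_def)
    moreover have "xr m j > 0" using xr_pos[of j m] j by (auto simp: d_def)
    ultimately have cj: "c j * \<rho> < 1" "c j \<ge> 0" using rho0 by (auto simp: c_def field_simps)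
    have gc: "ereal \<rho> < fps_conv_radius (geo (c j)) \<and> eval_fps (geo (c j)) \<rho> = 1 / (1 - c j * \<rho>)"
      using geo_conv[of "c j" \<rho>] cj rho0 by auto
    then show ?thesis using pow_conv[of \<rho> "geo (c j)" k] rho0 cj by auto
  qed
  have prc: "ereal \<rho> < fps_conv_radius (\<Prod>j\<in>{2..d}. geo (c j) ^ k) \<and>
     eval_fps (\<Prod>j\<in>{2..d}. geo (c j) ^ k) \<rho> = (\<Prod>j\<in>{2..d}. eval_fps (geo (c j) ^ k) \<rho>)"
    using prod_conv[of "{2..d}" \<rho> "\<lambda>j. geo (c j) ^ k"] geoj rho0 by auto
  have prpos: "(\<Prod>j\<in>{2..d}. eval_fps (geo (c j) ^ k) \<rho>) > 0"
    using geoj by (intro prod_pos) auto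
  have Npos: "eval_fps (EP N :: real fps) \<rho> > 0"
  proof -
    have "eval_fps (EP N :: real fps) \<rho> = poly (rp j0) \<rho> * poly (map_poly real_of_int (pxi xs)) \<rho>"
      by (simp add: EP_def N_def mi_mult rp_def)
    moreover have "poly (rp j0) \<rho> > 0" unfolding \<rho>_def using m2 by (intro rp_pos) (auto simp: j0_def)
    moreover have "poly (map_poly real_of_int (pxi xs)) \<rho> > 0"
    proof -
      have "j < m" if "j \<in> set xs" for j using that xi by (auto simp: xs_def le_less)
      then show ?thesis unfolding \<rho>_def using m2 by (intro mi_pxi_pos ballI rp_pos) auto
    qed
    ultimately show ?thesis by simp
  qed
  have grad: "ereal \<rho> < fps_conv_radius g"
  proof -
    have "ereal \<rho> < min (fps_conv_radius (EP N :: real fps)) (fps_conv_radius (\<Prod>j\<in>{2..d}. geo (c j) ^ k))"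
      using prc by (simp add: EP_def)
    also have "\<dots> \<le> fps_conv_radius g" unfolding g_def by (rule fps_conv_radius_mult)
    finally show ?thesis .
  qed
  have gev: "eval_fps g \<rho> > 0"
  proof -
    have "eval_fps g \<rho> = eval_fps (EP N :: real fps) \<rho> * eval_fps (\<Prod>j\<in>{2..d}. geo (c j) ^ k) \<rho>"
      unfolding g_def using prc rho0 by (intro eval_fps_mult) (auto simp: EP_def)
    then show ?thesis using prc prpos Npos by simp
  qed
  have "eventually (\<lambda>r. fps_nth (g * geo (1/\<rho>) ^ k) r > 0) sequentially"
    using growth[OF rho0 grad gev k1] .
  then show ?thesis
    by (rule eventually_mono) (simp add: RF[symmetric] RM_def)
qed

lemma case_a:
  assumes tge: "length (filter (\<lambda>i. i = m) xi) \<ge> mu div m + 1"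
  shows "(\<exists>q :: rat poly. Fser xi m mu = fps_of_poly q)
         \<and> (\<forall>\<^sub>F r in sequentially. fps_nth (Fser xi m mu) r = 0)"
proof -
  define t where "t = length (filter (\<lambda>i. i = m) xi)"
  define xs where "xs = filter (\<lambda>i. i \<noteq> m) xi"
  define k where "k = mu div m + 1"
  define j0 where "j0 = m - mu mod m - 1"
  define Q where "Q = pp j0 * pxi xs * pp m ^ (t - k)"
  define q :: "rat poly" where "q = map_poly of_int Q"
  have tk: "t = (t - k) + k" using tge by (simp add: t_def k_def)
  have eqA: "pp j0 * pxi xi = Q * pp m ^ k"
    unfolding Q_def xs_def using pxi_split[of xi m] tk
    by (metis (no_types, lifting) mult.assoc mult.commute power_add t_def)
  have "Fser xi m mu * EP (pp m ^ k) = EP (pp j0 * pxi xi)" unfolding j0_def k_def by (rule Fser_eq)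
  then have "Fser xi m mu * EP (pp m ^ k) = EP (Q * pp m ^ k)" unfolding eqA .
  then have "Fser xi m mu * EP (pp m) ^ k = EP Q * EP (pp m) ^ k"
    by (simp only: EP_mult EP_power)
  moreover have "(EP (pp m) :: rat fps) ^ k \<noteq> 0" using EP_pp_nz[of m, where 'a=rat] by simp
  ultimately have "Fser xi m mu = EP Q" by (metis mult_right_cancel)
  then have F: "Fser xi m mu = fps_of_poly q" by (simp add: EP_def q_def)
  have "\<forall>\<^sub>F r in sequentially. fps_nth (Fser xi m mu) r = 0"
    unfolding eventually_sequentially F
    by (intro exI[of _ "Suc (degree q)"]) (auto intro: coeff_eq_0)
  then show ?thesis using F by blast
qed

lemma case_1:
  assumes "\<forall>i\<in>set xi. 0 < i \<and> i \<le> 1"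
  shows "Fser xi 1 mu = 1"
proof -
  have "\<forall>i\<in>set xi. i = 1" using assms by force
  then have "pxi xi = 1" by (induction xi) (auto simp: pxi_def)
  then show ?thesis by (simp add: Fser_def)
qed

theorem theorem1p1:
  fixes m mu :: nat and xi :: "nat list"
  assumes "m \<ge> 1"
    and "sorted_wrt (\<ge>) xi"
    and "\<forall>i\<in>set xi. 0 < i \<and> i \<le> m"
  shows "(m = 1 \<longrightarrow> Fser xi 1 mu = 1)
       \<and> (m \<ge> 2 \<longrightarrow>
            (length (filter (\<lambda>i. i = m) xi) \<ge> mu div m + 1 \<longrightarrow>
               (\<exists>q :: rat poly. Fser xi m mu = fps_of_poly q)
               \<and> (\<forall>\<^sub>F r in sequentially. fps_nth (Fser xi m mu) r = 0))
          \<and> (length (filter (\<lambda>i. i = m) xi) \<le> mu div m \<longrightarrow>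
               (\<forall>\<^sub>F r in sequentially. fps_nth (Fser xi m mu) r > 0)))"
  using case_1[of xi mu] case_a[of mu m xi] case_b[of m xi mu] assms(3) by auto

end
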